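(* Let $Q=\{q_1,\ldots,q_n\}\subset\mathbb{P}^1$ be distinct points and $\vec g=(g_1,\ldots,g_n)$ effective divisors on $[0,1)$ of common degree $r$, $g_i=\sum_\alpha m_i(\alpha)[\alpha]$, with $\sum_{i,\alpha}m_i(\alpha)\alpha\in\mathbb{Z}$. Suppose the defect is strictly positive: $\delta(\vec g)=r(n-2)-\sum_i T(g_i)>0$. Fix, for each $i$, any good arrangement $a_{i,1},\ldots,a_{i,r}$ of $g_i$. Then it is possible to choose integers $k_1,\ldots,k_r$ satisfying $k_{j+1}\geq \tau_j+k_j+2-n$ for all $j=1,\ldots,r$ (indices modulo $r$, so $k_{r+1}=k_1$) such that $\deg^{\rm par}(E)=0$, where $E=\bigoplus_{j=1}^r E^j$ and $E^j=[k_j;a_{1,j},\ldots,a_{n,j}]$.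
   Context: A parabolic line bundle on $(\mathbb{P}^1,Q)$ is written $[k;a_1,\ldots,a_n]$ with $k\in\mathbb{Z}$, $a_i\in[0,1)$, meaning $\mathcal{O}(k)(a_1q_1+\cdots+a_nq_n)$ (underlying bundle $\mathcal{O}(k)$, weight $a_i$ at $q_i$); its parabolic degree is $k+\sum_i a_i$, and the parabolic degree of a direct sum is the sum. An arrangement of $g_i$ is a sequence $a_{i,1},\ldots,a_{i,r}\in[0,1)$ in which each $\alpha$ occurs exactly $m_i(\alpha)$ times. Indices are taken modulo $r$ ($a_{i,r+1}=a_{i,1}$). An arrangement is good if $\#\{t\in\{1,\ldots,r\}: a_{i,t}\geq a_{i,t+1}\}$ is minimal among all arrangements of $g_i$; this minimum is denoted $T(g_i)$. For the chosen arrangements, $\tau_j=\#\{i: a_{i,j}\geq a_{i,j+1}\}$. *)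

theory Defs
  imports Complex_Main "HOL-Library.Multiset"
begin

text \<open>Weights lie in [0,1); a divisor g on [0,1) is a multiset of reals in [0,1).
  Arrangements are lists (0-indexed, cyclic).\<close>

definition is_arrangement :: "real multiset \<Rightarrow> real list \<Rightarrow> bool" where
  "is_arrangement g xs \<longleftrightarrow> mset xs = g"

definition cyc_desc :: "real list \<Rightarrow> nat" where
  "cyc_desc xs = card {t. t < length xs \<and> xs ! t \<ge> xs ! ((t + 1) mod length xs)}"

definition T_min :: "real multiset \<Rightarrow> nat" where
  "T_min g = (LEAST c. \<exists>xs. is_arrangement g xs \<and> cyc_desc xs = c)"

definition good_arrangement :: "real multiset \<Rightarrow> real list \<Rightarrow> bool" where
  "good_arrangement g xs \<longleftrightarrow> is_arrangement g xs \<and> cyc_desc xs = T_min g"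

definition defect :: "nat \<Rightarrow> nat \<Rightarrow> (nat \<Rightarrow> real multiset) \<Rightarrow> int" where
  "defect n r g = int r * (int n - 2) - (\<Sum>i<n. int (T_min (g i)))"

definition tau :: "nat \<Rightarrow> nat \<Rightarrow> (nat \<Rightarrow> real list) \<Rightarrow> nat \<Rightarrow> nat" where
  "tau n r a j = card {i. i < n \<and> a i ! j \<ge> a i ! ((j + 1) mod r)}"

text \<open>Parabolic degree of the line bundle [k; w_1,...,w_n].\<close>
definition par_deg_lb :: "int \<Rightarrow> real list \<Rightarrow> real" where
  "par_deg_lb k ws = of_int k + sum_list ws"

definition par_deg_sum :: "(int \<times> real list) list \<Rightarrow> real" where
  "par_deg_sum Es = (\<Sum>E\<leftarrow>Es. par_deg_lb (fst E) (snd E))"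

end

theory Submission
  imports Defs
begin

lemma card_lt_sum: "card {i. i < (n::nat) \<and> P i} = (\<Sum>i<n. if P i then 1 else (0::nat))"
proof -
  have "(\<Sum>i<n. if P i then 1 else (0::nat)) = (\<Sum>i<n. of_bool (P i))" by (simp add: of_bool_def)
  also have "\<dots> = card ({..<n} \<inter> {x. P x})" using sum_of_bool_eq[of "{..<n}" P] by simp
  also have "{..<n} \<inter> {x. P x} = {i. i < n \<and> P i}" by auto
  finally show ?thesis by simp
qed

lemma sum_tau:
  assumes len: "\<forall>i<n. length (a i) = r"
  shows "(\<Sum>j<r. tau n r a j) = (\<Sum>i<n. cyc_desc (a i))"
proof -
  have "(\<Sum>j<r. tau n r a j) = (\<Sum>j<r. \<Sum>i<n. if a i ! j \<ge> a i ! ((j + 1) mod r) then 1 else (0::nat))"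
    unfolding tau_def by (simp add: card_lt_sum)
  also have "\<dots> = (\<Sum>i<n. \<Sum>j<r. if a i ! j \<ge> a i ! ((j + 1) mod r) then 1 else (0::nat))"
    by (rule sum.swap)
  also have "\<dots> = (\<Sum>i<n. cyc_desc (a i))"
    by (rule sum.cong, simp, simp add: cyc_desc_def card_lt_sum len)
  finally show ?thesis .
qed

lemma sum_col:
  "(\<Sum>j<r. sum_list (map (\<lambda>i. a i ! j) [0..<n])) = (\<Sum>i<n. \<Sum>j<r. (a i ! j :: real))"
proof -
  have "(\<Sum>j<r. sum_list (map (\<lambda>i. a i ! j) [0..<n])) = (\<Sum>j<r. \<Sum>i<n. (a i ! j :: real))"
    by (simp add: sum_list_sum_nth atLeast0LessThan)
  also have "\<dots> = (\<Sum>i<n. \<Sum>j<r. (a i ! j :: real))" by (rule sum.swap)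
  finally show ?thesis .
qed

theorem theorem6p8:
  fixes n r :: nat and g :: "nat \<Rightarrow> real multiset" and a :: "nat \<Rightarrow> real list"
  assumes deg: "\<forall>i<n. size (g i) = r"
    and range: "\<forall>i<n. \<forall>x\<in>#g i. 0 \<le> x \<and> x < 1"
    and integral: "(\<Sum>i<n. \<Sum>\<^sub># (g i)) \<in> \<int>"
    and pos: "defect n r g > 0"
    and good: "\<forall>i<n. good_arrangement (g i) (a i)"
  shows "\<exists>k :: nat \<Rightarrow> int.
     (\<forall>j<r. k ((j + 1) mod r) \<ge> int (tau n r a j) + k j + 2 - int n) \<and>
     par_deg_sum (map (\<lambda>j. (k j, map (\<lambda>i. a i ! j) [0..<n])) [0..<r]) = 0"
proof (cases "r = 0")
  case True
  then show ?thesis by (simp add: par_deg_sum_def)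
next
  case False
  then have r0: "r > 0" by simp
  have ms: "\<forall>i<n. mset (a i) = g i" using good by (simp add: good_arrangement_def is_arrangement_def)
  have len: "\<forall>i<n. length (a i) = r" using ms deg by (metis size_mset)
  have cd: "\<forall>i<n. cyc_desc (a i) = T_min (g i)" using good by (simp add: good_arrangement_def)
  obtain S where S: "(\<Sum>i<n. \<Sum>\<^sub># (g i)) = of_int S" using integral by (auto elim: Ints_cases)
  define c where "c j = int (tau n r a j) + (2 - int n)" for j
  have sumc: "(\<Sum>j<r. c j) \<le> -1"
  proof -
    have "(\<Sum>j<r. c j) = int (\<Sum>j<r. tau n r a j) + int r * (2 - int n)"
      unfolding c_def sum.distrib by simp
    also have "int (\<Sum>j<r. tau n r a j) = (\<Sum>i<n. int (T_min (g i)))"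
      using sum_tau[OF len] cd by simp
    finally show ?thesis using pos unfolding defect_def by (simp add: algebra_simps)
  qed
  define P where "P j = (\<Sum>l<j. c l)" for j
  define SP where "SP = (\<Sum>j<r. P j)"
  define t where "t = (- S - SP) mod int r"
  define m where "m = r - 1 - nat t"
  define K where "K = (- S - SP - t) div int r"
  have t0: "0 \<le> t" "t < int r" using r0 by (auto simp: t_def)
  have mr: "m < r" "int (r - 1 - m) = t" using t0 r0 by (auto simp: m_def)
  have K: "int r * K = - S - SP - t" unfolding K_def t_def
    by (metis dvd_minus_mod dvd_mult_div_cancel)
  define k where "k j = K + P j + (if j > m then 1 else 0)" for j
  have constr: "k ((j + 1) mod r) \<ge> int (tau n r a j) + k j + 2 - int n" if j: "j < r" for j
  proof (cases "j + 1 < r")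
    case True
    then show ?thesis by (simp add: k_def P_def c_def)
  next
    case False
    then have j1: "j + 1 = r" using j by auto
    then have jr: "j = r - 1" "(j+1) mod r = 0" by auto
    have "(\<Sum>j<r. c j) = (\<Sum>j<Suc (r - 1). c j)" using r0 by simp
    also have "\<dots> = P (r - 1) + c (r - 1)" by (simp add: P_def)
    finally have "(\<Sum>j<r. c j) = P (r - 1) + c (r - 1)" .
    moreover have "k 0 = K" by (simp add: k_def P_def)
    moreover have "k j \<le> K + P (r - 1) + 1" using jr by (simp add: k_def)
    ultimately show ?thesis using sumc jr(2) c_def[of "r - 1"] by (simp add: jr(1))
  qed
  have sumk: "(\<Sum>j<r. k j) = - S"
  proof -
    have "(\<Sum>j<r. k j) = int r * K + SP + (\<Sum>j<r. if j > m then 1 else 0)"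
      by (simp add: k_def sum.distrib SP_def)
    also have "(\<Sum>j<r. if j > m then 1 else (0::int)) = int (card {j. j < r \<and> m < j})"
      by (auto simp: card_lt_sum of_nat_sum intro!: sum.cong)
    also have "{j. j < r \<and> m < j} = {m<..<r}" by auto
    finally show ?thesis using K mr by simp
  qed
  have sa: "(\<Sum>j<r. a i ! j) = \<Sum>\<^sub># (g i)" if "i < n" for i
  proof -
    have "\<Sum>\<^sub># (g i) = sum_list (a i)" using ms that by (metis sum_mset_sum_list)
    also have "\<dots> = (\<Sum>j<r. a i ! j)" using len that by (simp add: sum_list_sum_nth atLeast0LessThan)
    finally show ?thesis by simp
  qed
  have "par_deg_sum (map (\<lambda>j. (k j, map (\<lambda>i. a i ! j) [0..<n])) [0..<r])
      = (\<Sum>j<r. of_int (k j) + sum_list (map (\<lambda>i. a i ! j) [0..<n]))"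
    by (simp add: par_deg_sum_def par_deg_lb_def sum_list_sum_nth atLeast0LessThan o_def)
  also have "\<dots> = of_int (\<Sum>j<r. k j) + (\<Sum>i<n. \<Sum>j<r. a i ! j)"
    by (simp add: sum.distrib sum_col)
  also have "(\<Sum>i<n. \<Sum>j<r. a i ! j) = (\<Sum>i<n. \<Sum>\<^sub># (g i))" using sa by simp
  finally have "par_deg_sum (map (\<lambda>j. (k j, map (\<lambda>i. a i ! j) [0..<n])) [0..<r]) = 0"
    using sumk S by simp
  then show ?thesis using constr by blast
qed

end
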